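(* Let $\lambda$ be a well-behaved hypergraph width measure, $k$ an integer, and $H$ a hypergraph with $\lambda\text{-}tw(H)\le k$. Let $H_0,H_1,\dots,H_\ell$ be a sequence with $H_0=H$, where each $H_{i+1}$ is obtained from $H_i$ by adding an edge $\{u,v\}$ ($u\ne v$) such that $\lambda_{H_0}(N_{\underline{H_i}}(u)\cap N_{\underline{H_i}}(v))>k$. Then every tree decomposition of $H$ of $\lambda$-width at most $k$ is a tree decomposition of $H_\ell$. Furthermore, if $S$ is an $(A,B)$-separator of $H$ with $\lambda_H(S)\le k$, then $S$ is an $(A,B)$-separator of each $H_i$.
   Context: A hypergraph $H$ has finite vertex set $V(H)$ and edge set $E(H)$ of subsets of $V(H)$; $||H||$ is the size of its encoding. The Gaifman graph $\underline{H}$ is the graph on $V(H)$ with two distinct vertices adjacent iff they lie in a common edge; $N_G(u)$ is the neighbourhood of $u$ in graph $G$. A set $S$ is an $(A,B)$-separator of $H$ if $A\cap B\subseteq S$ and every path in $\underline{H}$ from a vertex of $A$ to a vertex of $B$ contains a vertex of $S$. A tree decomposition of $H$ is a tree $T$ with bags $B_t\subseteq V(H)$ such that nodes containing a given vertex form a connected subtree and every edge of $\underline{H}$ is inside some bag. A width measure $\lambda$ assigns to each hypergraph $H$ a real function $\lambda_H$ on subsets of $V(H)$; the $\lambda$-width of a decomposition is $\max_t\lambda_H(B_t)$ and $\lambda\text{-}tw(H)$ is the minimum $\lambda$-width over tree decompositions of $H$. $\lambda$ is well-behaved if: (1) $\lambda_H(\{x\})\ge1$; (2) $\lambda_H(S\cup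 T)\le\lambda_H(S)+\lambda_H(T)$; (3) equality in (2) for disjoint $S,T$ with no edge of $\underline{H}$ between them; (4) $\lambda_F(S)\le\lambda_H(T)$ whenever $V(H)\subseteq V(F)$, $E(H)\subseteq E(F)$ and $S\subseteq T$; (5) $\lambda_H(S)\le k$ is decidable in time $||H||^{O(k)}$. *)

theory Defs
  imports Complex_Main
begin

record 'v hypergraph =
  verts :: "'v set"
  edges :: "'v set set"

definition hypergraph :: "'v hypergraph \<Rightarrow> bool" where
  "hypergraph H \<longleftrightarrow> finite (verts H) \<and> (\<forall>e\<in>edges H. e \<subseteq> verts H)"

text \<open>Adjacency in the Gaifman graph.\<close>
definition gadj :: "'v hypergraph \<Rightarrow> 'v \<Rightarrow> 'v \<Rightarrow> bool" where
  "gadj H u v \<longleftrightarrow> u \<noteq> v \<and> (\<exists>e\<in>edges H. u \<in> e \<and> v \<in> e)"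

definition gnbr :: "'v hypergraph \<Rightarrow> 'v \<Rightarrow> 'v set" where
  "gnbr H u = {w \<in> verts H. gadj H u w}"

definition add_edge :: "'v hypergraph \<Rightarrow> 'v \<Rightarrow> 'v \<Rightarrow> 'v hypergraph" where
  "add_edge H u v = \<lparr>verts = verts H, edges = insert {u, v} (edges H)\<rparr>"

definition gpath :: "'v hypergraph \<Rightarrow> 'v list \<Rightarrow> bool" where
  "gpath H xs \<longleftrightarrow> xs \<noteq> [] \<and> set xs \<subseteq> verts H \<and>
     (\<forall>i. Suc i < length xs \<longrightarrow> gadj H (xs ! i) (xs ! Suc i))"

definition separator :: "'v hypergraph \<Rightarrow> 'v set \<Rightarrow> 'v set \<Rightarrow> 'v set \<Rightarrow> bool" where
  "separator H A B S \<longleftrightarrow> A \<inter> B \<subseteq> S \<and>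
     (\<forall>xs. gpath H xs \<and> hd xs \<in> A \<and> last xs \<in> B \<longrightarrow> set xs \<inter> S \<noteq> {})"

definition has_cycle :: "('t \<Rightarrow> 't \<Rightarrow> bool) \<Rightarrow> bool" where
  "has_cycle adj \<longleftrightarrow> (\<exists>xs. length xs \<ge> 3 \<and> distinct xs \<and>
      (\<forall>i. Suc i < length xs \<longrightarrow> adj (xs ! i) (xs ! Suc i)) \<and> adj (last xs) (hd xs))"

definition connected_in :: "('t \<Rightarrow> 't \<Rightarrow> bool) \<Rightarrow> 't set \<Rightarrow> bool" where
  "connected_in adj M \<longleftrightarrow>
     (\<forall>x\<in>M. \<forall>y\<in>M. (x, y) \<in> {(a, b). adj a b \<and> a \<in> M \<and> b \<in> M}\<^sup>*)"

definition is_tree :: "'t set \<Rightarrow> ('t \<Rightarrow> 't \<Rightarrow> bool) \<Rightarrow> bool" where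
  "is_tree N adj \<longleftrightarrow> finite N \<and> N \<noteq> {} \<and>
     (\<forall>x y. adj x y \<longrightarrow> x \<in> N \<and> y \<in> N \<and> x \<noteq> y \<and> adj y x) \<and>
     connected_in adj N \<and> \<not> has_cycle adj"

definition tree_decomp ::
  "'v hypergraph \<Rightarrow> 't set \<Rightarrow> ('t \<Rightarrow> 't \<Rightarrow> bool) \<Rightarrow> ('t \<Rightarrow> 'v set) \<Rightarrow> bool" where
  "tree_decomp H N adj bag \<longleftrightarrow> is_tree N adj \<and>
     (\<forall>t\<in>N. bag t \<subseteq> verts H) \<and>
     (\<forall>v\<in>verts H. \<exists>t\<in>N. v \<in> bag t) \<and>
     (\<forall>v\<in>verts H. connected_in adj {t \<in> N. v \<in> bag t}) \<and>
     (\<forall>u v. gadj H u v \<longrightarrow> (\<exists>t\<in>N. u \<in> bag t \<and> v \<in> bag t))"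

type_synonym 'v width_measure = "'v hypergraph \<Rightarrow> 'v set \<Rightarrow> real"

definition decomp_width ::
  "'v width_measure \<Rightarrow> 'v hypergraph \<Rightarrow> 't set \<Rightarrow> ('t \<Rightarrow> 'v set) \<Rightarrow> real" where
  "decomp_width lam H N bag = Max ((\<lambda>t. lam H (bag t)) ` N)"

text \<open>lambda-tw(H) <= k: some tree decomposition has lambda-width at most k.
  Node sets are taken in nat (every finite tree is isomorphic to one on nat).\<close>
definition tw_le :: "'v width_measure \<Rightarrow> 'v hypergraph \<Rightarrow> real \<Rightarrow> bool" where
  "tw_le lam H k \<longleftrightarrow> (\<exists>(N::nat set) adj bag. tree_decomp H N adj bag \<and> decomp_width lam H N bag \<le> k)"

text \<open>Conditions (1)-(4) of well-behavedness (condition (5), a running-time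
  bound, is not expressed).\<close>
definition well_behaved :: "'v width_measure \<Rightarrow> bool" where
  "well_behaved lam \<longleftrightarrow>
    (\<forall>H x. hypergraph H \<and> x \<in> verts H \<longrightarrow> lam H {x} \<ge> 1) \<and>
    (\<forall>H S T. hypergraph H \<and> S \<subseteq> verts H \<and> T \<subseteq> verts H \<longrightarrow>
        lam H (S \<union> T) \<le> lam H S + lam H T) \<and>
    (\<forall>H S T. hypergraph H \<and> S \<subseteq> verts H \<and> T \<subseteq> verts H \<and> S \<inter> T = {} \<and>
        (\<forall>s\<in>S. \<forall>t\<in>T. \<not> gadj H s t) \<longrightarrow> lam H (S \<union> T) = lam H S + lam H T) \<and>
    (\<forall>F H S T. hypergraph F \<and> hypergraph H \<and> verts H \<subseteq> verts F \<and> edges H \<subseteq> edges F \<and>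
        S \<subseteq> T \<and> T \<subseteq> verts H \<longrightarrow> lam F S \<le> lam H T)"

end

theory Submission
  imports Defs
begin

fun walk :: "('a \<Rightarrow> 'a \<Rightarrow> bool) \<Rightarrow> 'a list \<Rightarrow> bool" where
  "walk adj [] = False"
| "walk adj [x] = True"
| "walk adj (x # y # xs) = (adj x y \<and> walk adj (y # xs))"

lemma walk_ne: "walk adj xs \<Longrightarrow> xs \<noteq> []"
  by (cases xs) auto

lemma walk_Cons: "walk adj (x # ys) \<longleftrightarrow> ys = [] \<or> (adj x (hd ys) \<and> walk adj ys)"
  by (cases ys) auto

lemma walk_nth: "walk adj xs \<longleftrightarrow> xs \<noteq> [] \<and> (\<forall>i. Suc i < length xs \<longrightarrow> adj (xs!i) (xs!Suc i))"
proof (induction adj xs rule: walk.induct)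
  case (3 adj x y xs)
  show ?case
  proof
    assume "walk adj (x#y#xs)"
    then have a: "adj x y" and w: "\<forall>i. Suc i < length (y#xs) \<longrightarrow> adj ((y#xs)!i) ((y#xs)!Suc i)"
      using 3 by auto
    show "x#y#xs \<noteq> [] \<and> (\<forall>i. Suc i < length (x#y#xs) \<longrightarrow> adj ((x#y#xs)!i) ((x#y#xs)!Suc i))"
    proof (intro conjI allI impI)
      fix i assume "Suc i < length (x#y#xs)"
      then show "adj ((x#y#xs)!i) ((x#y#xs)!Suc i)" using a w by (cases i) auto
    qed simp
  next
    assume h: "x#y#xs \<noteq> [] \<and> (\<forall>i. Suc i < length (x#y#xs) \<longrightarrow> adj ((x#y#xs)!i) ((x#y#xs)!Suc i))"
    have "adj x y" using h[THEN conjunct2, rule_format, of 0] by simp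
    moreover have "\<forall>i. Suc i < length (y#xs) \<longrightarrow> adj ((y#xs)!i) ((y#xs)!Suc i)"
    proof (intro allI impI)
      fix i assume "Suc i < length (y#xs)"
      then show "adj ((y#xs)!i) ((y#xs)!Suc i)" using h[THEN conjunct2, rule_format, of "Suc i"] by simp
    qed
    ultimately show "walk adj (x#y#xs)" using 3 by simp
  qed
qed auto

lemma walk_mid: "walk adj (xs @ y # ys) \<longleftrightarrow> walk adj (xs @ [y]) \<and> walk adj (y # ys)"
  by (induction xs) (auto simp: walk_Cons hd_append)

lemma walk_append: "walk adj xs \<Longrightarrow> walk adj ys \<Longrightarrow> adj (last xs) (hd ys) \<Longrightarrow> walk adj (xs @ ys)"
proof -
  assume a: "walk adj xs" "walk adj ys" "adj (last xs) (hd ys)"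
  obtain zs z where xs: "xs = zs @ [z]" using walk_ne[OF a(1)] by (metis rev_exhaust)
  obtain b bs where ys: "ys = b # bs" using walk_ne[OF a(2)] by (cases ys) auto
  have "walk adj (zs @ [z] @ [b])" using a xs ys walk_mid[of adj zs z "[b]"] by simp
  then have "walk adj ((zs @ [z]) @ [b])" by simp
  then show ?thesis using a xs ys walk_mid[of adj "zs @ [z]" b bs] by simp
qed

lemma walk_distinct:
  "walk adj xs \<Longrightarrow> \<exists>ys. walk adj ys \<and> distinct ys \<and> hd ys = hd xs \<and> last ys = last xs \<and> set ys \<subseteq> set xs"
proof (induction xs rule: length_induct)
  case (1 xs)
  show ?case
  proof (cases "distinct xs")
    case True then show ?thesis using 1 by blast
  next
    case False
    then obtain as bs cs y where xs: "xs = as @ [y] @ bs @ [y] @ cs" using not_distinct_decomp by blast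
    have "walk adj ((as @ [y] @ bs) @ y # cs)" using 1(2) xs by simp
    then have w1: "walk adj (y # cs)" and w2: "walk adj ((as @ [y] @ bs) @ [y])"
      using walk_mid[of adj "as @ [y] @ bs" y cs] by simp_all
    have "walk adj (as @ y # (bs @ [y]))" using w2 by simp
    then have "walk adj (as @ [y])" using walk_mid[of adj as y "bs @ [y]"] by simp
    then have w: "walk adj (as @ y # cs)" using w1 walk_mid[of adj as y cs] by simp
    have len: "length (as @ y # cs) < length xs" using xs by simp
    have h: "hd (as @ y # cs) = hd xs" using xs by (cases as) auto
    have l: "last (as @ y # cs) = last xs" using xs by (cases cs) auto
    have st: "set (as @ y # cs) \<subseteq> set xs" using xs by auto
    obtain zs where zs: "walk adj zs" "distinct zs" "hd zs = hd (as @ y # cs)"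
      "last zs = last (as @ y # cs)" "set zs \<subseteq> set (as @ y # cs)"
      using 1(1)[rule_format, OF len w] by blast
    show ?thesis
      by (rule exI[of _ zs]) (use zs h l st in auto)
  qed
qed

definition ron :: "('t \<Rightarrow> 't \<Rightarrow> bool) \<Rightarrow> 't set \<Rightarrow> ('t \<times> 't) set" where
  "ron adj M = {(a, b). adj a b \<and> a \<in> M \<and> b \<in> M}"

lemma connected_in_ron: "connected_in adj M \<longleftrightarrow> (\<forall>x\<in>M. \<forall>y\<in>M. (x, y) \<in> (ron adj M)\<^sup>*)"
  by (simp add: connected_in_def ron_def)

lemma rt_walk:
  assumes "(x, y) \<in> (ron adj M)\<^sup>*" "x \<in> M"
  shows "\<exists>xs. walk adj xs \<and> hd xs = x \<and> last xs = y \<and> set xs \<subseteq> M"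
  using assms(1)
proof (induction rule: rtrancl_induct)
  case base then show ?case using assms(2) by (intro exI[of _ "[x]"]) auto
next
  case (step y z)
  then obtain xs where xs: "walk adj xs" "hd xs = x" "last xs = y" "set xs \<subseteq> M" by blast
  have "walk adj (xs @ [z])" using walk_append[OF xs(1), of "[z]"] step(2) xs(3) by (simp add: ron_def)
  moreover have "hd (xs @ [z]) = x" using xs walk_ne by (cases xs) auto
  ultimately show ?case using xs step(2) by (intro exI[of _ "xs @ [z]"]) (auto simp: ron_def)
qed

lemma conn_dwalk:
  assumes "connected_in adj M" "x \<in> M" "y \<in> M"
  shows "\<exists>xs. walk adj xs \<and> distinct xs \<and> hd xs = x \<and> last xs = y \<and> set xs \<subseteq> M"
proof -
  obtain xs where "walk adj xs" "hd xs = x" "last xs = y" "set xs \<subseteq> M"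
    using rt_walk assms connected_in_ron by metis
  then show ?thesis using walk_distinct by fastforce
qed

lemma unique_cross:
  assumes nc: "\<not> has_cycle adj" and sy: "\<forall>x y. adj x y \<longrightarrow> adj y x"
    and P: "connected_in adj P" and Q: "connected_in adj Q" and PQ: "P \<inter> Q = {}"
    and "s \<in> P" "s' \<in> P" "t \<in> Q" "t' \<in> Q" "adj s t" "adj s' t'"
  shows "s = s'"
proof (rule ccontr)
  assume ne: "s \<noteq> s'"
  obtain ps where ps: "walk adj ps" "distinct ps" "hd ps = s" "last ps = s'" "set ps \<subseteq> P"
    using conn_dwalk[OF P] assms by blast
  obtain qs where qs: "walk adj qs" "distinct qs" "hd qs = t'" "last qs = t" "set qs \<subseteq> Q"
    using conn_dwalk[OF Q] assms by blast
  have "length ps \<ge> 2"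
  proof (rule ccontr)
    assume "\<not> length ps \<ge> 2"
    then have "length ps = 1" using walk_ne[OF ps(1)] by (cases ps) (auto simp: Suc_le_eq)
    then obtain a where "ps = [a]" by (cases ps) auto
    then show False using ps ne by simp
  qed
  moreover have "qs \<noteq> []" using walk_ne qs by blast
  ultimately have len: "length (ps @ qs) \<ge> 3" by (cases qs) auto
  have w: "walk adj (ps @ qs)" using walk_append ps qs assms by metis
  have d: "distinct (ps @ qs)" using ps qs PQ by auto
  have "hd (ps @ qs) = s" using ps walk_ne by (cases ps) auto
  moreover have "last (ps @ qs) = t" using qs walk_ne[OF qs(1)] by simp
  ultimately have "adj (last (ps @ qs)) (hd (ps @ qs))" using sy assms by metis
  then have "has_cycle adj" unfolding has_cycle_def using len w d walk_nth by metis
  then show False using nc by blast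
qed

lemma cross:
  assumes "(b, a) \<in> (ron adj M)\<^sup>*" "b \<in> D" "\<forall>x y. adj x y \<longrightarrow> adj y x"
    and cl: "\<forall>z z'. z \<in> D \<longrightarrow> adj z z' \<longrightarrow> z' \<notin> X \<longrightarrow> z' \<in> D"
  shows "a \<in> D \<or> (\<exists>p q. p \<in> X \<and> p \<in> M \<and> q \<in> D \<and> q \<in> M \<and> adj p q)"
  using assms(1)
proof (induction rule: rtrancl_induct)
  case base then show ?case using assms(2) by simp
next
  case (step z z')
  then have zz: "adj z z'" "z \<in> M" "z' \<in> M" by (auto simp: ron_def)
  show ?case
  proof (cases "z \<in> D")
    case True
    show ?thesis
    proof (cases "z' \<in> X")
      case True
      then show ?thesis using \<open>z \<in> D\<close> zz assms(3) by blast
    next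
      case False
      then show ?thesis using \<open>z \<in> D\<close> zz cl by blast
    qed
  next
    case False then show ?thesis using step by blast
  qed
qed


lemma tree_helly:
  assumes tree: "is_tree N adj"
    and X: "X \<subseteq> N" "X \<noteq> {}" "connected_in adj X"
    and Y: "Y \<subseteq> N" "Y \<noteq> {}" "connected_in adj Y"
    and XY: "X \<inter> Y = {}"
  shows "\<exists>s\<in>N. \<forall>Z. Z \<subseteq> N \<longrightarrow> connected_in adj Z \<longrightarrow> Z \<inter> X \<noteq> {} \<longrightarrow> Z \<inter> Y \<noteq> {} \<longrightarrow> s \<in> Z"
proof -
  have sy: "\<forall>x y. adj x y \<longrightarrow> adj y x" and inN: "\<And>x y. adj x y \<Longrightarrow> x \<in> N \<and> y \<in> N"
    and nc: "\<not> has_cycle adj" and cN: "connected_in adj N"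
    using tree unfolding is_tree_def by blast+
  define D where "D = {z. \<exists>y\<in>Y. (y, z) \<in> (ron adj (N - X))\<^sup>*}"
  have YD: "Y \<subseteq> D" unfolding D_def by blast
  have DNX: "D \<subseteq> N - X"
  proof
    fix z assume "z \<in> D"
    then obtain y where y: "y \<in> Y" "(y, z) \<in> (ron adj (N - X))\<^sup>*" unfolding D_def by blast
    from y(2) show "z \<in> N - X"
    proof (cases rule: rtranclE)
      case base then show ?thesis using y(1) Y(1) XY by blast
    next
      case (step w) then show ?thesis by (auto simp: ron_def)
    qed
  qed
  have cl: "\<forall>z z'. z \<in> D \<longrightarrow> adj z z' \<longrightarrow> z' \<notin> X \<longrightarrow> z' \<in> D"
  proof (intro allI impI)
    fix z z' assume a: "z \<in> D" "adj z z'" "z' \<notin> X"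
    then obtain y where y: "y \<in> Y" "(y, z) \<in> (ron adj (N - X))\<^sup>*" unfolding D_def by blast
    have z1: "z \<in> N - X" using a(1) DNX by blast
    have z2: "z' \<in> N" using inN[OF a(2)] by blast
    have "(z, z') \<in> ron adj (N - X)" using z1 z2 a(2,3) by (simp add: ron_def)
    then have "(y, z') \<in> (ron adj (N - X))\<^sup>*" by (rule rtrancl_into_rtrancl[OF y(2)])
    then show "z' \<in> D" unfolding D_def using y(1) by blast
  qed
  have lift: "(y, z) \<in> (ron adj D)\<^sup>*" if y: "y \<in> Y" and yz: "(y, z) \<in> (ron adj (N - X))\<^sup>*" for y z
    using yz
  proof (induction rule: rtrancl_induct)
    case base then show ?case by simp
  next
    case (step a b)
    have aD: "a \<in> D" unfolding D_def using y step(1) by blast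
    have "(y, b) \<in> (ron adj (N - X))\<^sup>*" using step(1,2) by (rule rtrancl_into_rtrancl)
    then have bD: "b \<in> D" unfolding D_def using y by blast
    have "adj a b" using step(2) by (simp add: ron_def)
    then have "(a, b) \<in> ron adj D" using aD bD by (simp add: ron_def)
    with step(3) show ?case by (rule rtrancl_into_rtrancl)
  qed
  have symRD: "sym ((ron adj D)\<^sup>*)"
    by (rule sym_rtrancl) (auto simp: sym_def ron_def sy)
  have cD: "connected_in adj D"
    unfolding connected_in_ron
  proof (intro ballI)
    fix p q assume "p \<in> D" "q \<in> D"
    then obtain y1 y2 where y: "y1 \<in> Y" "(y1, p) \<in> (ron adj (N - X))\<^sup>*"
        "y2 \<in> Y" "(y2, q) \<in> (ron adj (N - X))\<^sup>*" unfolding D_def by blast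
    have 1: "(p, y1) \<in> (ron adj D)\<^sup>*" using symD[OF symRD lift[OF y(1,2)]] .
    have "(y1, y2) \<in> (ron adj Y)\<^sup>*" using Y(3)[unfolded connected_in_ron] y by blast
    moreover have "ron adj Y \<subseteq> ron adj D" using YD by (auto simp: ron_def)
    ultimately have 2: "(y1, y2) \<in> (ron adj D)\<^sup>*" using rtrancl_mono by blast
    have 3: "(y2, q) \<in> (ron adj D)\<^sup>*" using lift[OF y(3,4)] .
    show "(p, q) \<in> (ron adj D)\<^sup>*" using 1 2 3 by (meson rtrancl_trans)
  qed
  obtain x0 y0 where x0: "x0 \<in> X" and y0: "y0 \<in> Y" using X Y by blast
  have "(y0, x0) \<in> (ron adj N)\<^sup>*" using cN[unfolded connected_in_ron] x0 y0 X Y by blast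
  moreover have "x0 \<notin> D" using x0 DNX by blast
  ultimately obtain s t where st: "s \<in> X" "s \<in> N" "t \<in> D" "adj s t"
    using cross[of y0 x0 adj N D X] y0 YD sy cl by blast
  show ?thesis
  proof (intro bexI[of _ s] allI impI)
    fix Z assume Z: "Z \<subseteq> N" "connected_in adj Z" "Z \<inter> X \<noteq> {}" "Z \<inter> Y \<noteq> {}"
    then obtain a b where ab: "a \<in> Z" "a \<in> X" "b \<in> Z" "b \<in> Y" by blast
    have "(b, a) \<in> (ron adj Z)\<^sup>*" using Z(2)[unfolded connected_in_ron] ab by blast
    moreover have "a \<notin> D" using ab DNX by blast
    ultimately obtain p q where pq: "p \<in> X" "p \<in> Z" "q \<in> D" "adj p q"
      using cross[of b a adj Z D X] ab YD sy cl by blast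
    have "s = p" using unique_cross[OF nc sy X(3) cD _ st(1) pq(1) st(3) pq(3) st(4) pq(4)] DNX by blast
    then show "s \<in> Z" using pq by simp
  qed (use st in simp)
qed


lemma gadj_sym: "gadj G u v \<Longrightarrow> gadj G v u"
  by (auto simp: gadj_def)

lemma gadj_add: "gadj (add_edge G u v) x y \<longleftrightarrow> gadj G x y \<or> (x \<noteq> y \<and> x \<in> {u, v} \<and> y \<in> {u, v})"
  by (auto simp: gadj_def add_edge_def)

lemma verts_add[simp]: "verts (add_edge G u v) = verts G"
  by (simp add: add_edge_def)

lemma gpath_walk: "gpath G xs \<longleftrightarrow> walk (gadj G) xs \<and> set xs \<subseteq> verts G"
  by (auto simp: gpath_def walk_nth)

lemma td_step:
  assumes td: "tree_decomp G N adj bag" and uv: "\<exists>t\<in>N. u \<in> bag t \<and> v \<in> bag t"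
  shows "tree_decomp (add_edge G u v) N adj bag"
proof -
  have o1: "is_tree N adj" and o2: "\<forall>t\<in>N. bag t \<subseteq> verts G" and o3: "\<forall>v\<in>verts G. \<exists>t\<in>N. v \<in> bag t"
    and o4: "\<forall>v\<in>verts G. connected_in adj {t \<in> N. v \<in> bag t}"
    and o5: "\<forall>u v. gadj G u v \<longrightarrow> (\<exists>t\<in>N. u \<in> bag t \<and> v \<in> bag t)"
    using td unfolding tree_decomp_def by simp_all
  have n5: "\<forall>x y. gadj (add_edge G u v) x y \<longrightarrow> (\<exists>t\<in>N. x \<in> bag t \<and> y \<in> bag t)"
  proof (intro allI impI)
    fix x y assume "gadj (add_edge G u v) x y"
    then have "gadj G x y \<or> (x \<in> {u, v} \<and> y \<in> {u, v})" by (simp add: gadj_add) blast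
    then show "\<exists>t\<in>N. x \<in> bag t \<and> y \<in> bag t"
    proof
      assume "gadj G x y" then show ?thesis using o5 by blast
    next
      assume xy: "x \<in> {u, v} \<and> y \<in> {u, v}"
      obtain t where "t \<in> N" "u \<in> bag t" "v \<in> bag t" using uv by blast
      then show ?thesis using xy by auto
    qed
  qed
  show ?thesis unfolding tree_decomp_def verts_add using o1 o2 o3 o4 n5 by simp
qed

lemma lift_path:
  assumes w: "w \<in> gnbr G u \<inter> gnbr G v" "w \<notin> S"
  shows "walk (gadj (add_edge G u v)) xs \<Longrightarrow> set xs \<subseteq> verts G \<Longrightarrow> set xs \<inter> S = {} \<Longrightarrow>
    \<exists>ys. walk (gadj G) ys \<and> set ys \<subseteq> verts G \<and> set ys \<inter> S = {} \<and> hd ys = hd xs \<and> last ys = last xs"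
proof (induction xs)
  case Nil then show ?case by simp
next
  case (Cons x xs)
  show ?case
  proof (cases "xs = []")
    case True
    have "walk (gadj G) [x] \<and> set [x] \<subseteq> verts G \<and> set [x] \<inter> S = {} \<and> hd [x] = hd (x # xs) \<and> last [x] = last (x # xs)"
      using Cons.prems(2,3) True by simp
    then show ?thesis by (rule exI)
  next
    case False
    have "xs = [] \<or> (gadj (add_edge G u v) x (hd xs) \<and> walk (gadj (add_edge G u v)) xs)"
      using Cons.prems(1) by (simp only: walk_Cons)
    then have a: "gadj (add_edge G u v) x (hd xs)" and wx: "walk (gadj (add_edge G u v)) xs"
      using False by simp_all
    have s1: "set xs \<subseteq> verts G" "set xs \<inter> S = {}" using Cons.prems(2,3) by auto
    obtain ys where ys: "walk (gadj G) ys" "set ys \<subseteq> verts G" "set ys \<inter> S = {}" "hd ys = hd xs" "last ys = last xs"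
      using Cons.IH[OF wx s1] by blast
    have yne: "ys \<noteq> []" using walk_ne ys(1) by blast
    have lst: "last (x # xs) = last xs" using False by simp
    have xV: "x \<in> verts G" "x \<notin> S" using Cons.prems(2,3) by auto
    show ?thesis
    proof (cases "gadj G x (hd xs)")
      case True
      then have "walk (gadj G) (x # ys)" using ys(1,4) yne by (simp add: walk_Cons)
      then have "walk (gadj G) (x # ys) \<and> set (x # ys) \<subseteq> verts G \<and> set (x # ys) \<inter> S = {} \<and>
          hd (x # ys) = hd (x # xs) \<and> last (x # ys) = last (x # xs)"
        using ys(2,3,5) yne xV lst by simp
      then show ?thesis by (rule exI)
    next
      case nf: False
      have "gadj G x (hd xs) \<or> (x \<noteq> hd xs \<and> x \<in> {u, v} \<and> hd xs \<in> {u, v})"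
        using a by (simp only: gadj_add)
      then have xuv: "x \<in> {u, v}" "hd xs \<in> {u, v}" using nf by simp_all
      have wu: "gadj G u w" "gadj G v w" using w by (auto simp: gnbr_def)
      have wu': "gadj G w u" "gadj G w v" using gadj_sym[OF wu(1)] gadj_sym[OF wu(2)] by simp_all
      have 1: "gadj G x w" using xuv wu by auto
      have 2: "gadj G w (hd ys)" using xuv(2) wu' ys(4) by auto
      have "walk (gadj G) (x # w # ys)" using 1 2 ys(1) yne by (simp add: walk_Cons)
      moreover have "w \<in> verts G" using w by (auto simp: gnbr_def)
      ultimately have "walk (gadj G) (x # w # ys) \<and> set (x # w # ys) \<subseteq> verts G \<and> set (x # w # ys) \<inter> S = {} \<and>
          hd (x # w # ys) = hd (x # xs) \<and> last (x # w # ys) = last (x # xs)"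
        using ys(2,3,5) yne xV lst w(2) by simp
      then show ?thesis by (rule exI)
    qed
  qed
qed

lemma sep_step:
  assumes "separator G A B S" "w \<in> gnbr G u \<inter> gnbr G v" "w \<notin> S"
  shows "separator (add_edge G u v) A B S"
  unfolding separator_def
proof (intro conjI allI impI)
  show "A \<inter> B \<subseteq> S" using assms(1) by (simp add: separator_def)
  fix xs assume h: "gpath (add_edge G u v) xs \<and> hd xs \<in> A \<and> last xs \<in> B"
  show "set xs \<inter> S \<noteq> {}"
  proof
    assume e: "set xs \<inter> S = {}"
    have w1: "walk (gadj (add_edge G u v)) xs" "set xs \<subseteq> verts G"
      using h gpath_walk[of "add_edge G u v" xs] by auto
    obtain ys where ys: "walk (gadj G) ys" "set ys \<subseteq> verts G" "set ys \<inter> S = {}" "hd ys = hd xs" "last ys = last xs"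
      using lift_path[OF assms(2,3) w1(1) w1(2) e] by blast
    have "gpath G ys" using ys(1,2) gpath_walk by blast
    then have "set ys \<inter> S \<noteq> {}" using assms(1) h ys(4,5) unfolding separator_def by metis
    then show False using ys(3) by blast
  qed
qed

theorem mainTheorem17:
  fixes lam :: "'v width_measure" and k :: int and H :: "'v hypergraph"
    and Hs :: "nat \<Rightarrow> 'v hypergraph" and l :: nat
  assumes wb: "well_behaved lam"
    and hH: "hypergraph H"
    and tw: "tw_le lam H (real_of_int k)"
    and H0: "Hs 0 = H"
    and step: "\<forall>i<l. \<exists>u v. u \<noteq> v \<and> u \<in> verts (Hs i) \<and> v \<in> verts (Hs i) \<and>
                 Hs (Suc i) = add_edge (Hs i) u v \<and>
                 lam H (gnbr (Hs i) u \<inter> gnbr (Hs i) v) > real_of_int k"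
  shows "(\<forall>(N :: 't set) adj bag. tree_decomp H N adj bag \<and> decomp_width lam H N bag \<le> real_of_int k
            \<longrightarrow> tree_decomp (Hs l) N adj bag)
       \<and> (\<forall>A B S. S \<subseteq> verts H \<and> separator H A B S \<and> lam H S \<le> real_of_int k
            \<longrightarrow> (\<forall>i\<le>l. separator (Hs i) A B S))"
proof -
  have m4: "\<forall>F H S T. hypergraph F \<and> hypergraph H \<and> verts H \<subseteq> verts F \<and> edges H \<subseteq> edges F \<and>
        S \<subseteq> T \<and> T \<subseteq> verts H \<longrightarrow> lam F S \<le> lam H T"
    using wb[unfolded well_behaved_def] by (rule conjunct2[THEN conjunct2[THEN conjunct2]])
  have mono: "\<And>S T. S \<subseteq> T \<Longrightarrow> T \<subseteq> verts H \<Longrightarrow> lam H S \<le> lam H T"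
    using m4 hH by simp
  have vs: "verts (Hs i) = verts H" if "i \<le> l" for i
    using that
  proof (induction i)
    case 0 then show ?case using H0 by simp
  next
    case (Suc i)
    then obtain u v where "Hs (Suc i) = add_edge (Hs i) u v" using step by (meson Suc_le_lessD)
    then show ?case using Suc by simp
  qed
  have gsub: "gnbr G x \<subseteq> verts G" for G :: "'v hypergraph" and x by (auto simp: gnbr_def)
  have P1: "tree_decomp (Hs l) N adj bag"
    if td: "tree_decomp H N adj bag" and wd: "decomp_width lam H N bag \<le> real_of_int k"
    for N :: "'t set" and adj bag
  proof -
    have tree: "is_tree N adj" using td by (simp add: tree_decomp_def)
    have fin: "finite N" using tree by (simp add: is_tree_def)
    have "tree_decomp (Hs i) N adj bag" if "i \<le> l" for i
      using that
    proof (induction i)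
      case 0 then show ?case using H0 td by simp
    next
      case (Suc i)
      have il: "i < l" "i \<le> l" using Suc by auto
      have tdi: "tree_decomp (Hs i) N adj bag" using Suc il by blast
      obtain u v where uv: "u \<noteq> v" "u \<in> verts (Hs i)" "v \<in> verts (Hs i)"
        "Hs (Suc i) = add_edge (Hs i) u v" "lam H (gnbr (Hs i) u \<inter> gnbr (Hs i) v) > real_of_int k"
        using step il(1) by blast
      define C where "C = gnbr (Hs i) u \<inter> gnbr (Hs i) v"
      have "\<exists>t\<in>N. u \<in> bag t \<and> v \<in> bag t"
      proof (rule ccontr)
        assume nb: "\<not> (\<exists>t\<in>N. u \<in> bag t \<and> v \<in> bag t)"
        let ?T = "\<lambda>x. {t \<in> N. x \<in> bag t}"
        have cov: "\<forall>x\<in>verts (Hs i). ?T x \<noteq> {}" and con: "\<forall>x\<in>verts (Hs i). connected_in adj (?T x)"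
          and ed: "\<forall>x y. gadj (Hs i) x y \<longrightarrow> (\<exists>t\<in>N. x \<in> bag t \<and> y \<in> bag t)"
          using tdi unfolding tree_decomp_def by blast+
        obtain s where s: "s \<in> N" "\<forall>Z. Z \<subseteq> N \<longrightarrow> connected_in adj Z \<longrightarrow> Z \<inter> ?T u \<noteq> {} \<longrightarrow> Z \<inter> ?T v \<noteq> {} \<longrightarrow> s \<in> Z"
          using tree_helly[OF tree, of "?T u" "?T v"] cov con uv nb by blast
        have "C \<subseteq> bag s"
        proof
          fix w assume w: "w \<in> C"
          then have wv: "w \<in> verts (Hs i)" using gsub unfolding C_def by blast
          have "gadj (Hs i) u w" "gadj (Hs i) v w" using w by (auto simp: C_def gnbr_def)
          then have "?T w \<inter> ?T u \<noteq> {}" "?T w \<inter> ?T v \<noteq> {}" using ed by blast+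
          moreover have "?T w \<subseteq> N" by blast
          moreover have "connected_in adj (?T w)" using con wv by blast
          ultimately have "s \<in> ?T w" using s(2) by presburger
          then show "w \<in> bag s" by simp
        qed
        moreover have "bag s \<subseteq> verts H" using td s(1) by (simp add: tree_decomp_def)
        ultimately have "lam H C \<le> lam H (bag s)" using mono by blast
        also have "\<dots> \<le> decomp_width lam H N bag" unfolding decomp_width_def
          using fin s(1) by (intro Max_ge) auto
        finally show False using wd uv(5) unfolding C_def by linarith
      qed
      then show ?case using td_step[OF tdi] uv(4) by simp
    qed
    then show ?thesis by simp
  qed
  have P2: "separator (Hs i) A B S"
    if "S \<subseteq> verts H" "separator H A B S" "lam H S \<le> real_of_int k" "i \<le> l" for A B S i
    using that(4)
  proof (induction i)
    case 0 then show ?case using H0 that by simp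
  next
    case (Suc i)
    have il: "i < l" "i \<le> l" using Suc by auto
    obtain u v where uv: "u \<noteq> v" "u \<in> verts (Hs i)" "v \<in> verts (Hs i)"
      "Hs (Suc i) = add_edge (Hs i) u v" "lam H (gnbr (Hs i) u \<inter> gnbr (Hs i) v) > real_of_int k"
      using step il(1) by blast
    have "\<not> (gnbr (Hs i) u \<inter> gnbr (Hs i) v \<subseteq> S)"
    proof
      assume "gnbr (Hs i) u \<inter> gnbr (Hs i) v \<subseteq> S"
      then have "lam H (gnbr (Hs i) u \<inter> gnbr (Hs i) v) \<le> lam H S" using mono that(1) by blast
      then show False using uv(5) that(3) by linarith
    qed
    then obtain w where "w \<in> gnbr (Hs i) u \<inter> gnbr (Hs i) v" "w \<notin> S" by blast
    then show ?case using sep_step[of "Hs i" A B S w u v] Suc il uv(4) by simp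
  qed
  show ?thesis using P1 P2 by blast
qed

end
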